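(* Let $Z\in\{0,1\}$ and $S(1),S(0)\in\{0,1\}$ be random variables with $Z\perp\!\!\!\perp \{S(1),S(0),\mathbf{X}\}$, where $\mathbf{X}$ is a covariate vector, and let $S=S(Z)$. Let $p_1=\Pr(S=1\mid Z=1)$ and $p_0=\Pr(S=1\mid Z=0)$, and assume $p_1\ge p_0$. Suppose there is a constant $\xi$ with $0\le \xi<1$ such that $\xi = \Pr(U=\bar{s}s\mid\mathbf{X})/\Pr(U=s\bar{s}\mid\mathbf{X})$. Then $$\pi_{s\bar{s}} = \frac{p_1-p_0}{1-\xi},\quad \pi_{\bar{s}\bar{s}} = 1-p_0-\frac{p_1-p_0}{1-\xi},\quad \pi_{ss} = p_1 - \frac{p_1-p_0}{1-\xi},\quad \pi_{\bar{s}s} = \frac{\xi(p_1-p_0)}{1-\xi},$$ and consequently $$0\le \xi\le 1-\frac{p_1-p_0}{\min(p_1,1-p_0)}\le 1.$$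
   Context: The principal stratum is $U=(S(1),S(0))$, whose values $(1,1),(1,0),(0,1),(0,0)$ are labelled $ss, s\bar{s}, \bar{s}s, \bar{s}\bar{s}$; $\pi_u=\Pr(U=u)$. No monotonicity assumption is made. Conditioning events and denominators (including $\Pr(U=s\bar{s}\mid\mathbf{X})$ and $\min(p_1,1-p_0)$) are assumed positive. *)

theory Defs
  imports "HOL-Probability.Probability"
begin

text \<open>Binary variables are encoded as bool (True = 1, False = 0).
  The principal stratum U = (S(1), S(0)); the event U = (a,b).\<close>
definition stratum_event :: "'a measure \<Rightarrow> ('a \<Rightarrow> bool) \<Rightarrow> ('a \<Rightarrow> bool) \<Rightarrow> bool \<Rightarrow> bool \<Rightarrow> 'a set" where
  "stratum_event M S1 S0 a b = {\<omega> \<in> space M. S1 \<omega> = a \<and> S0 \<omega> = b}"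

definition pi_U :: "'a measure \<Rightarrow> ('a \<Rightarrow> bool) \<Rightarrow> ('a \<Rightarrow> bool) \<Rightarrow> bool \<Rightarrow> bool \<Rightarrow> real" where
  "pi_U M S1 S0 a b = measure M (stratum_event M S1 S0 a b)"

definition cond_pi_U :: "'a measure \<Rightarrow> ('a \<Rightarrow> 'b) \<Rightarrow> 'b measure \<Rightarrow> ('a \<Rightarrow> bool) \<Rightarrow> ('a \<Rightarrow> bool) \<Rightarrow> bool \<Rightarrow> bool \<Rightarrow> 'a \<Rightarrow> real" where
  "cond_pi_U M X N S1 S0 a b = real_cond_exp M (vimage_algebra (space M) X N) (indicator (stratum_event M S1 S0 a b))"

definition obs_S :: "('a \<Rightarrow> bool) \<Rightarrow> ('a \<Rightarrow> bool) \<Rightarrow> ('a \<Rightarrow> bool) \<Rightarrow> 'a \<Rightarrow> bool" where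
  "obs_S Z S1 S0 = (\<lambda>\<omega>. if Z \<omega> then S1 \<omega> else S0 \<omega>)"

definition p_obs :: "'a measure \<Rightarrow> ('a \<Rightarrow> bool) \<Rightarrow> ('a \<Rightarrow> bool) \<Rightarrow> ('a \<Rightarrow> bool) \<Rightarrow> bool \<Rightarrow> real" where
  "p_obs M Z S1 S0 z =
     measure M {\<omega> \<in> space M. obs_S Z S1 S0 \<omega> \<and> Z \<omega> = z} / measure M {\<omega> \<in> space M. Z \<omega> = z}"

end

theory Submission
  imports Defs
begin

theorem proposition5:
  fixes M :: "'a measure" and Z S1 S0 :: "'a \<Rightarrow> bool"
    and X :: "'a \<Rightarrow> 'b" and N :: "'b measure" and \<xi> :: real
  assumes "prob_space M"
    and "Z \<in> measurable M (count_space UNIV)"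
    and "S1 \<in> measurable M (count_space UNIV)"
    and "S0 \<in> measurable M (count_space UNIV)"
    and "X \<in> measurable M N"
    and indep: "\<And>z A. A \<in> sets (count_space UNIV \<Otimes>\<^sub>M count_space UNIV \<Otimes>\<^sub>M N) \<Longrightarrow>
           measure M {\<omega> \<in> space M. Z \<omega> = z \<and> (S1 \<omega>, S0 \<omega>, X \<omega>) \<in> A}
         = measure M {\<omega> \<in> space M. Z \<omega> = z} * measure M {\<omega> \<in> space M. (S1 \<omega>, S0 \<omega>, X \<omega>) \<in> A}"
    and "measure M {\<omega> \<in> space M. Z \<omega>} > 0"
    and "measure M {\<omega> \<in> space M. \<not> Z \<omega>} > 0"
    and "p_obs M Z S1 S0 True \<ge> p_obs M Z S1 S0 False"
    and "0 \<le> \<xi>" and "\<xi> < 1"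
    and "AE \<omega> in M. cond_pi_U M X N S1 S0 True False \<omega> > 0"
    and "AE \<omega> in M. \<xi> = cond_pi_U M X N S1 S0 False True \<omega> / cond_pi_U M X N S1 S0 True False \<omega>"
    and "min (p_obs M Z S1 S0 True) (1 - p_obs M Z S1 S0 False) > 0"
  shows "let p1 = p_obs M Z S1 S0 True; p0 = p_obs M Z S1 S0 False in
           pi_U M S1 S0 True False = (p1 - p0) / (1 - \<xi>) \<and>
           pi_U M S1 S0 False False = 1 - p0 - (p1 - p0) / (1 - \<xi>) \<and>
           pi_U M S1 S0 True True = p1 - (p1 - p0) / (1 - \<xi>) \<and>
           pi_U M S1 S0 False True = \<xi> * (p1 - p0) / (1 - \<xi>) \<and>
           0 \<le> \<xi> \<and> \<xi> \<le> 1 - (p1 - p0) / min p1 (1 - p0) \<and>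
           1 - (p1 - p0) / min p1 (1 - p0) \<le> 1"
proof -
  interpret P: prob_space M by fact
  note [measurable] = assms(2,3,4,5)
  define F where "F = vimage_algebra (space M) X N"
  have sub: "subalgebra M F"
  proof -
    have fs: "X \<in> space M \<rightarrow> space N" using assms(5) by (auto intro: measurable_space)
    show ?thesis unfolding subalgebra_def F_def
      using assms(5) by (auto simp: sets_vimage_algebra2[OF fs] space_vimage_algebra intro: measurable_sets)
  qed
  interpret SF: sigma_finite_subalgebra M F
    by (rule finite_measure_subalgebra_is_sigma_finite)
       (simp add: finite_measure_subalgebra_def finite_measure_subalgebra_axioms_def sub P.finite_measure_axioms)
  have ev[measurable]: "stratum_event M S1 S0 a b \<in> sets M" for a b
    unfolding stratum_event_def by measurable
  have int_ce: "(\<integral>x. cond_pi_U M X N S1 S0 a b x \<partial>M) = pi_U M S1 S0 a b" for a b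
  proof -
    have "integrable M (indicator (stratum_event M S1 S0 a b) :: 'a \<Rightarrow> real)"
      using ev by (intro integrable_real_indicator) (simp_all add: less_top[symmetric])
    then show ?thesis unfolding cond_pi_U_def pi_U_def F_def[symmetric]
      using SF.real_cond_exp_int(2) by simp
  qed
  define a where "a = pi_U M S1 S0 True False"
  have "AE \<omega> in M. cond_pi_U M X N S1 S0 False True \<omega> = \<xi> * cond_pi_U M X N S1 S0 True False \<omega>"
    using assms(12,13) by eventually_elim auto
  then have "(\<integral>x. cond_pi_U M X N S1 S0 False True x \<partial>M) = (\<integral>x. \<xi> * cond_pi_U M X N S1 S0 True False x \<partial>M)"
    by (intro integral_cong_AE) (auto simp: cond_pi_U_def F_def[symmetric])
  then have xi: "pi_U M S1 S0 False True = \<xi> * a"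
    unfolding a_def int_ce[symmetric] by simp
  have ind: "measure M {\<omega> \<in> space M. Z \<omega> = z \<and> (S1 \<omega>, S0 \<omega>, X \<omega>) \<in> A}
         = measure M {\<omega> \<in> space M. Z \<omega> = z} * measure M {\<omega> \<in> space M. (S1 \<omega>, S0 \<omega>, X \<omega>) \<in> A}"
    if "A \<in> sets (count_space UNIV \<Otimes>\<^sub>M count_space UNIV \<Otimes>\<^sub>M N)" for z A
    using indep[OF that] .
  have A1: "{True} \<times> (UNIV \<times> space N) \<in> sets (count_space UNIV \<Otimes>\<^sub>M count_space UNIV \<Otimes>\<^sub>M N)"
    by (intro pair_measureI) auto
  have A0: "UNIV \<times> ({True} \<times> space N) \<in> sets (count_space UNIV \<Otimes>\<^sub>M count_space UNIV \<Otimes>\<^sub>M N)"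
    by (intro pair_measureI) auto
  have Xs: "\<omega> \<in> space M \<Longrightarrow> X \<omega> \<in> space N" for \<omega>
    using assms(5) by (rule measurable_space)
  have e1: "{\<omega> \<in> space M. Z \<omega> = True \<and> (S1 \<omega>, S0 \<omega>, X \<omega>) \<in> {True} \<times> (UNIV \<times> space N)}
     = {\<omega> \<in> space M. obs_S Z S1 S0 \<omega> \<and> Z \<omega> = True}"
    using Xs by (auto simp: obs_S_def)
  have e1': "{\<omega> \<in> space M. (S1 \<omega>, S0 \<omega>, X \<omega>) \<in> {True} \<times> (UNIV \<times> space N)} = {\<omega> \<in> space M. S1 \<omega>}"
    using Xs by auto
  have e0: "{\<omega> \<in> space M. Z \<omega> = False \<and> (S1 \<omega>, S0 \<omega>, X \<omega>) \<in> UNIV \<times> ({True} \<times> space N)}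
     = {\<omega> \<in> space M. obs_S Z S1 S0 \<omega> \<and> Z \<omega> = False}"
    using Xs by (auto simp: obs_S_def)
  have e0': "{\<omega> \<in> space M. (S1 \<omega>, S0 \<omega>, X \<omega>) \<in> UNIV \<times> ({True} \<times> space N)} = {\<omega> \<in> space M. S0 \<omega>}"
    using Xs by auto
  have p1: "p_obs M Z S1 S0 True = measure M {\<omega> \<in> space M. S1 \<omega>}"
    using ind[OF A1, of True] assms(7) unfolding e1 e1' p_obs_def by simp
  have p0: "p_obs M Z S1 S0 False = measure M {\<omega> \<in> space M. S0 \<omega>}"
    using ind[OF A0, of False] assms(8) unfolding e0 e0' p_obs_def by simp
  have split: "measure M {\<omega> \<in> space M. P \<omega>} = measure M {\<omega> \<in> space M. P \<omega> \<and> Q \<omega>} + measure M {\<omega> \<in> space M. P \<omega> \<and> \<not> Q \<omega>}"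
    if [measurable]: "Measurable.pred M P" "Measurable.pred M Q" for P Q
  proof -
    have "{\<omega> \<in> space M. P \<omega>} = {\<omega> \<in> space M. P \<omega> \<and> Q \<omega>} \<union> {\<omega> \<in> space M. P \<omega> \<and> \<not> Q \<omega>}" by auto
    then show ?thesis
      by (simp add: P.finite_measure_Union) (subst P.finite_measure_Union; auto)
  qed
  have s1: "measure M {\<omega> \<in> space M. S1 \<omega>} = pi_U M S1 S0 True True + pi_U M S1 S0 True False"
    unfolding pi_U_def stratum_event_def by (subst split[of S1 S0]) auto
  have s0: "measure M {\<omega> \<in> space M. S0 \<omega>} = pi_U M S1 S0 True True + pi_U M S1 S0 False True"
    unfolding pi_U_def stratum_event_def by (subst split[of S0 S1]) (auto intro!: arg_cong2[where f="(+)"] arg_cong[where f="measure M"])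
  have sn1: "measure M {\<omega> \<in> space M. \<not> S1 \<omega>} = pi_U M S1 S0 False True + pi_U M S1 S0 False False"
    unfolding pi_U_def stratum_event_def by (subst split[of "\<lambda>\<omega>. \<not> S1 \<omega>" S0]) auto
  have tot: "measure M {\<omega> \<in> space M. S1 \<omega>} + measure M {\<omega> \<in> space M. \<not> S1 \<omega>} = 1"
    using split[of "\<lambda>_. True" S1] P.prob_space by simp
  have nn: "pi_U M S1 S0 u v \<ge> 0" for u v unfolding pi_U_def by simp
  define p1' where "p1' = p_obs M Z S1 S0 True"
  define p0' where "p0' = p_obs M Z S1 S0 False"
  have d: "p1' - p0' = (1 - \<xi>) * a"
    using p1 p0 s1 s0 xi unfolding p1'_def p0'_def a_def by (simp add: algebra_simps)
  have xi1: "1 - \<xi> > 0" using assms(11) by simp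
  have aeq: "a = (p1' - p0') / (1 - \<xi>)" using d xi1 by (simp add: field_simps)
  have m: "min p1' (1 - p0') > 0" using assms(14) unfolding p1'_def p0'_def .
  have ale: "a \<le> min p1' (1 - p0')"
    using p1 p0 s1 s0 sn1 tot nn[of True True] nn[of False False] unfolding p1'_def p0'_def a_def by simp
  have ineq: "\<xi> \<le> 1 - (p1' - p0') / min p1' (1 - p0')"
  proof -
    have "(p1' - p0') / min p1' (1 - p0') = (1 - \<xi>) * (a / min p1' (1 - p0'))" using d by simp
    also have "\<dots> \<le> (1 - \<xi>) * 1" using ale m xi1 by (intro mult_left_mono) auto
    finally show ?thesis by simp
  qed
  have ineq2: "1 - (p1' - p0') / min p1' (1 - p0') \<le> 1"
    using m assms(9) unfolding p1'_def p0'_def by simp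
  have f1: "pi_U M S1 S0 True False = (p1' - p0') / (1 - \<xi>)" using aeq a_def by simp
  have f2: "pi_U M S1 S0 False False = 1 - p0' - a"
    using p0 s0 s1 sn1 tot xi unfolding p0'_def a_def by simp
  have f3: "pi_U M S1 S0 True True = p1' - a"
    using p1 s1 unfolding p1'_def a_def by simp
  have f4: "pi_U M S1 S0 False True = \<xi> * (p1' - p0') / (1 - \<xi>)"
    using xi aeq by simp
  show ?thesis
    unfolding Let_def p1'_def[symmetric] p0'_def[symmetric]
    using f1 f2 f3 f4 aeq ineq ineq2 assms(10) by simp
qed

end
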